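(* Let $A\subset\mathbb{R}$ and $a\in\mathbb{R}$. Then the following are equivalent: (i) every function $f:A\to\mathbb{R}$ which has a $T_5$ limit at $a$ has exactly one $T_5$ limit at $a$ (i.e. if $T_5\lim_{x\to a}f(x)=L_1$ and $T_5\lim_{x\to a}f(x)=L_2$ then $L_1=L_2$); (ii) for every real $\delta>0$ the set $\left((a-\delta,a+\delta)\setminus\{a\}\right)\cap A$ is uncountable.
   Context: For $A\subset\mathbb{R}$, $f:A\to\mathbb{R}$ and $a,L\in\mathbb{R}$, one writes $T_5\lim_{x\to a}f(x)=L$ (and says $L$ is a $T_5$ limit of $f$ at $a$) if for every real $\varepsilon>0$ there exists a real $\delta_\varepsilon>0$ such that the set $\left\{x\in\left((a-\delta_{\varepsilon},a+\delta_{\varepsilon})\setminus\{a\}\right)\cap A:\ |f(x)-L|\geq\varepsilon\right\}$ is countable (finite or countably infinite). *)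

theory Defs
  imports "HOL-Analysis.Analysis"
begin

text \<open>T5 limit: L is a T5 limit of f (restricted to A) at a.
  A function f : A -> R is modelled as a total function real => real whose
  values outside A are irrelevant.\<close>
definition T5_limit :: "real set \<Rightarrow> (real \<Rightarrow> real) \<Rightarrow> real \<Rightarrow> real \<Rightarrow> bool" where
  "T5_limit A f a L \<longleftrightarrow>
     (\<forall>\<epsilon>>0. \<exists>\<delta>>0. countable {x \<in> ({a - \<delta> <..< a + \<delta>} - {a}) \<inter> A. \<bar>f x - L\<bar> \<ge> \<epsilon>})"

end

theory Submission
  imports Defs
begin

lemma tri_aux:
  fixes u L1 L2 e :: real
  assumes "e = \<bar>L1 - L2\<bar> / 2" "\<bar>u - L1\<bar> < e" "\<bar>u - L2\<bar> < e"
  shows False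
  using assms by (simp add: abs_if split: if_splits) linarith?

theorem theorem2:
  fixes A :: "real set" and a :: real
  shows "(\<forall>f :: real \<Rightarrow> real. \<forall>L1 L2. T5_limit A f a L1 \<and> T5_limit A f a L2 \<longrightarrow> L1 = L2)
     \<longleftrightarrow> (\<forall>\<delta>>0. uncountable (({a - \<delta> <..< a + \<delta>} - {a}) \<inter> A))"
proof
  assume H: "\<forall>f :: real \<Rightarrow> real. \<forall>L1 L2. T5_limit A f a L1 \<and> T5_limit A f a L2 \<longrightarrow> L1 = L2"
  show "\<forall>\<delta>>0. uncountable (({a - \<delta> <..< a + \<delta>} - {a}) \<inter> A)"
  proof (intro allI impI notI)
    fix \<delta> :: real
    assume d: "\<delta> > 0" and c: "countable (({a - \<delta> <..< a + \<delta>} - {a}) \<inter> A)"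
    have "T5_limit A (\<lambda>x. 0) a L" for L
      unfolding T5_limit_def
    proof (intro allI impI exI conjI)
      fix e :: real assume "e > 0"
      show "\<delta> > 0" by (rule d)
      show "countable {x \<in> ({a - \<delta> <..< a + \<delta>} - {a}) \<inter> A. \<bar>(0::real) - L\<bar> \<ge> e}"
        by (rule countable_subset[OF _ c]) auto
    qed
    then have "(0::real) = 1" using H by blast
    then show False by simp
  qed
next
  assume U: "\<forall>\<delta>>0. uncountable (({a - \<delta> <..< a + \<delta>} - {a}) \<inter> A)"
  show "\<forall>f :: real \<Rightarrow> real. \<forall>L1 L2. T5_limit A f a L1 \<and> T5_limit A f a L2 \<longrightarrow> L1 = L2"
  proof (intro allI impI, rule ccontr)
    fix f :: "real \<Rightarrow> real" and L1 L2 :: real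
    assume T: "T5_limit A f a L1 \<and> T5_limit A f a L2" and ne: "L1 \<noteq> L2"
    define e where "e = \<bar>L1 - L2\<bar> / 2"
    have e: "e > 0" using ne by (simp add: e_def)
    obtain d1 where d1: "d1 > 0" "countable {x \<in> ({a - d1 <..< a + d1} - {a}) \<inter> A. \<bar>f x - L1\<bar> \<ge> e}"
      using T e unfolding T5_limit_def by blast
    obtain d2 where d2: "d2 > 0" "countable {x \<in> ({a - d2 <..< a + d2} - {a}) \<inter> A. \<bar>f x - L2\<bar> \<ge> e}"
      using T e unfolding T5_limit_def by blast
    define d where "d = min d1 d2"
    have dp: "d > 0" using d1 d2 by (simp add: d_def)
    have "({a - d <..< a + d} - {a}) \<inter> A \<subseteq>
          {x \<in> ({a - d1 <..< a + d1} - {a}) \<inter> A. \<bar>f x - L1\<bar> \<ge> e} \<union>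
          {x \<in> ({a - d2 <..< a + d2} - {a}) \<inter> A. \<bar>f x - L2\<bar> \<ge> e}"
    proof
      fix x assume x: "x \<in> ({a - d <..< a + d} - {a}) \<inter> A"
      have "\<bar>f x - L1\<bar> \<ge> e \<or> \<bar>f x - L2\<bar> \<ge> e"
      proof (rule ccontr)
        assume "\<not> (\<bar>f x - L1\<bar> \<ge> e \<or> \<bar>f x - L2\<bar> \<ge> e)"
        then have a1: "\<bar>f x - L1\<bar> < e" and a2: "\<bar>f x - L2\<bar> < e" by auto
        show False by (rule tri_aux[OF e_def a1 a2])
      qed
      show "x \<in> {x \<in> ({a - d1 <..< a + d1} - {a}) \<inter> A. \<bar>f x - L1\<bar> \<ge> e} \<union>
          {x \<in> ({a - d2 <..< a + d2} - {a}) \<inter> A. \<bar>f x - L2\<bar> \<ge> e}"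
      proof -
        have "d \<le> d1" "d \<le> d2" by (simp_all add: d_def)
        then have "x \<in> ({a - d1 <..< a + d1} - {a}) \<inter> A" "x \<in> ({a - d2 <..< a + d2} - {a}) \<inter> A"
          using x by auto
        with \<open>\<bar>f x - L1\<bar> \<ge> e \<or> \<bar>f x - L2\<bar> \<ge> e\<close> show ?thesis by blast
      qed
    qed
    then have "countable (({a - d <..< a + d} - {a}) \<inter> A)"
      by (rule countable_subset[OF _ countable_Un[OF d1(2) d2(2)]])
    then show False using U dp by blast
  qed
qed

end
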